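(* For any simple undirected graph $G$ with $n$ vertices, $$\Phi_2=\sum_{\{st,uv\}\in Q}(k_s+k_t)(k_u+k_v)=\frac12\sum_{st\in E}(k_s+k_t)\Big(n\langle k^2\rangle-(\xi(s)+\xi(t))-k_s(k_s-1)-k_t(k_t-1)\Big).$$
   Context: $k_x$ is the degree of $x$, $\langle k^2\rangle=\frac1n\sum_x k_x^2$, $\xi(s)=\sum_{t\in\Gamma(s)}k_t$ is the sum of the degrees of the neighbours of $s$. $Q$ is the set of unordered pairs $\{st,uv\}$ of edges with $s,t,u,v$ pairwise distinct. *)

theory Defs
  imports Complex_Main
begin

definition simple_graph :: "'a set \<Rightarrow> 'a set set \<Rightarrow> bool" where
  "simple_graph V E \<longleftrightarrow> finite V \<and> (\<forall>e\<in>E. e \<subseteq> V \<and> card e = 2)"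

definition deg :: "'a set set \<Rightarrow> 'a \<Rightarrow> nat" where
  "deg E x = card {e\<in>E. x \<in> e}"

definition nbhd :: "'a set set \<Rightarrow> 'a \<Rightarrow> 'a set" where
  "nbhd E s = {t. {s, t} \<in> E}"

definition xi :: "'a set set \<Rightarrow> 'a \<Rightarrow> nat" where
  "xi E s = (\<Sum>t\<in>nbhd E s. deg E t)"

definition mean_sq_deg :: "'a set \<Rightarrow> 'a set set \<Rightarrow> real" where
  "mean_sq_deg V E = (1 / real (card V)) * (\<Sum>x\<in>V. real (deg E x) ^ 2)"

definition Qpairs :: "'a set set \<Rightarrow> 'a set set set" where
  "Qpairs E = {{e1, e2} | e1 e2 s t u v. e1 \<in> E \<and> e2 \<in> E \<and> e1 = {s, t} \<and> e2 = {u, v}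
      \<and> s \<noteq> t \<and> s \<noteq> u \<and> s \<noteq> v \<and> t \<noteq> u \<and> t \<noteq> v \<and> u \<noteq> v}"

end

theory Submission
  imports Defs
begin

lemma sg_fin: "simple_graph V E \<Longrightarrow> finite E"
  unfolding simple_graph_def
  by (meson PowI finite_Pow_iff rev_finite_subset subsetI)

lemma sg_edge: "simple_graph V E \<Longrightarrow> e \<in> E \<Longrightarrow> \<exists>a b. a \<noteq> b \<and> e = {a, b}"
  unfolding simple_graph_def by (metis card_2_iff)

lemma two_eq: "card f = 2 \<Longrightarrow> a \<in> f \<Longrightarrow> b \<in> f \<Longrightarrow> a \<noteq> b \<Longrightarrow> f = {a, b}"
  by (auto simp: card_2_iff)

lemma deg_fin: "simple_graph V E \<Longrightarrow> finite {e\<in>E. x \<in> e}"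
  using sg_fin[of V E] by auto

lemma w_pair: "a \<noteq> b \<Longrightarrow> real (\<Sum>x\<in>{a,b}. deg E x) = real (deg E a) + real (deg E b)"
  by simp

lemma w_total:
  assumes "simple_graph V E"
  shows "(\<Sum>f\<in>E. real (\<Sum>x\<in>f. deg E x)) = (\<Sum>x\<in>V. real (deg E x) ^ 2)"
proof -
  have fE: "finite E" using sg_fin[OF assms] .
  have fV: "finite V" using assms by (simp add: simple_graph_def)
  have "(\<Sum>f\<in>E. real (\<Sum>x\<in>f. deg E x)) = (\<Sum>f\<in>E. \<Sum>x\<in>{x\<in>V. x \<in> f}. real (deg E x))"
  proof (rule sum.cong)
    fix f assume "f \<in> E"
    then have "{x\<in>V. x \<in> f} = f" using assms by (auto simp: simple_graph_def)
    then show "real (\<Sum>x\<in>f. deg E x) = (\<Sum>x\<in>{x\<in>V. x \<in> f}. real (deg E x))" by simp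
  qed simp
  also have "\<dots> = (\<Sum>x\<in>V. \<Sum>f\<in>{f\<in>E. x \<in> f}. real (deg E x))"
    by (rule sum.swap_restrict[OF fE fV])
  also have "\<dots> = (\<Sum>x\<in>V. real (deg E x) ^ 2)"
    by (simp add: deg_def power2_eq_square)
  finally show ?thesis .
qed

lemma nbhd_sub: "simple_graph V E \<Longrightarrow> nbhd E s \<subseteq> V"
  unfolding simple_graph_def nbhd_def by auto

lemma star:
  assumes "simple_graph V E"
  shows "(\<Sum>f\<in>{f\<in>E. s \<in> f}. real (\<Sum>x\<in>f. deg E x)) = real (deg E s) ^ 2 + real (xi E s)"
proof -
  have fV: "finite V" using assms by (simp add: simple_graph_def)
  have fN: "finite (nbhd E s)" using nbhd_sub[OF assms] fV finite_subset by blast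
  have ne: "t \<noteq> s" if "t \<in> nbhd E s" for t
  proof
    assume "t = s"
    then have "{s} \<in> E" using that by (simp add: nbhd_def)
    then show False using assms by (simp add: simple_graph_def, fastforce)
  qed
  have inj: "inj_on (\<lambda>t. {s, t}) (nbhd E s)"
    by (rule inj_onI) (metis doubleton_eq_iff)
  have img: "(\<lambda>t. {s, t}) ` nbhd E s = {f\<in>E. s \<in> f}"
  proof
    show "(\<lambda>t. {s, t}) ` nbhd E s \<subseteq> {f\<in>E. s \<in> f}" by (auto simp: nbhd_def)
  next
    show "{f\<in>E. s \<in> f} \<subseteq> (\<lambda>t. {s, t}) ` nbhd E s"
    proof
      fix f assume f: "f \<in> {f\<in>E. s \<in> f}"
      then obtain a b where ab: "a \<noteq> b" "f = {a, b}" using sg_edge[OF assms] by blast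
      then obtain t where "f = {s, t}" using f by auto
      then show "f \<in> (\<lambda>t. {s, t}) ` nbhd E s" using f by (auto simp: nbhd_def)
    qed
  qed
  have cardN: "card (nbhd E s) = deg E s"
    unfolding deg_def using card_image[OF inj] img by simp
  have "(\<Sum>f\<in>{f\<in>E. s \<in> f}. real (\<Sum>x\<in>f. deg E x)) = (\<Sum>t\<in>nbhd E s. real (\<Sum>x\<in>{s,t}. deg E x))"
    using sum.reindex[OF inj, of "\<lambda>f. real (\<Sum>x\<in>f. deg E x)"] img by simp
  also have "\<dots> = (\<Sum>t\<in>nbhd E s. real (deg E s) + real (deg E t))"
    by (rule sum.cong) (auto dest: ne)
  also have "\<dots> = real (card (nbhd E s)) * real (deg E s) + real (xi E s)"
    by (simp add: sum.distrib xi_def)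
  finally show ?thesis using cardN by (simp add: power2_eq_square)
qed

lemma disj_sum:
  assumes "simple_graph V E" "{a,b} \<in> E" "a \<noteq> b"
  shows "(\<Sum>f\<in>{f\<in>E. {a,b} \<inter> f = {}}. real (\<Sum>x\<in>f. deg E x))
    = (\<Sum>x\<in>V. real (deg E x) ^ 2) - (real (xi E a) + real (xi E b))
      - real (deg E a) * (real (deg E a) - 1) - real (deg E b) * (real (deg E b) - 1)"
proof -
  let ?w = "\<lambda>f. real (\<Sum>x\<in>f. deg E x)"
  let ?A = "{f\<in>E. a \<in> f}" and ?B = "{f\<in>E. b \<in> f}"
  have fE: "finite E" using sg_fin[OF assms(1)] .
  have eq: "{f\<in>E. {a,b} \<inter> f = {}} = E - (?A \<union> ?B)" by auto
  have AB: "?A \<inter> ?B = {{a,b}}"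
  proof
    show "?A \<inter> ?B \<subseteq> {{a,b}}"
    proof
      fix f assume "f \<in> ?A \<inter> ?B"
      then show "f \<in> {{a,b}}" using two_eq[of f a b] assms by (auto simp: simple_graph_def)
    qed
  qed (use assms in auto)
  have "sum ?w (E - (?A \<union> ?B)) = sum ?w E - sum ?w (?A \<union> ?B)"
    by (rule sum_diff) (use fE in auto)
  also have "sum ?w (?A \<union> ?B) = sum ?w ?A + sum ?w ?B - sum ?w (?A \<inter> ?B)"
    by (rule sum_Un) (use fE in auto)
  also have "sum ?w (?A \<inter> ?B) = real (deg E a) + real (deg E b)"
    using AB assms(3) by simp
  finally show ?thesis
    using eq star[OF assms(1), of a] star[OF assms(1), of b] w_total[OF assms(1)]
    by (simp add: power2_eq_square algebra_simps)
qed

lemma lhs_eq: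
  assumes "simple_graph V E"
  shows "(\<Sum>p\<in>Qpairs E. \<Prod>e\<in>p. real (\<Sum>x\<in>e. deg E x))
    = (1/2) * (\<Sum>e\<in>E. \<Sum>f\<in>{f\<in>E. e \<inter> f = {}}. real (\<Sum>x\<in>e. deg E x) * real (\<Sum>x\<in>f. deg E x))"
proof -
  let ?w = "\<lambda>f. real (\<Sum>x\<in>f. deg E x)"
  define D where "D = Sigma E (\<lambda>e. {f\<in>E. e \<inter> f = {}})"
  have fE: "finite E" using sg_fin[OF assms] .
  have fD: "finite D" unfolding D_def using fE by auto
  have ne: "e \<noteq> {}" if "e \<in> E" for e using sg_edge[OF assms that] by auto
  have Q: "Qpairs E = (\<lambda>(e,f). {e,f}) ` D"
  proof
    show "Qpairs E \<subseteq> (\<lambda>(e,f). {e,f}) ` D"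
      unfolding Qpairs_def D_def by (auto simp: image_iff)
  next
    show "(\<lambda>(e,f). {e,f}) ` D \<subseteq> Qpairs E"
    proof
      fix p assume "p \<in> (\<lambda>(e,f). {e,f}) ` D"
      then obtain e f where ef: "e \<in> E" "f \<in> E" "e \<inter> f = {}" "p = {e,f}"
        unfolding D_def by auto
      obtain s t where st: "s \<noteq> t" "e = {s,t}" using sg_edge[OF assms ef(1)] by blast
      obtain u v where uv: "u \<noteq> v" "f = {u,v}" using sg_edge[OF assms ef(2)] by blast
      show "p \<in> Qpairs E" unfolding Qpairs_def
        using ef st uv by blast
    qed
  qed
  have "(\<Sum>e\<in>E. \<Sum>f\<in>{f\<in>E. e \<inter> f = {}}. ?w e * ?w f) = (\<Sum>(e,f)\<in>D. ?w e * ?w f)"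
    unfolding D_def by (rule sum.Sigma) (use fE in auto)
  also have "\<dots> = (\<Sum>p\<in>(\<lambda>(e,f). {e,f}) ` D. \<Sum>q\<in>{q\<in>D. (\<lambda>(e,f). {e,f}) q = p}. (\<lambda>(e,f). ?w e * ?w f) q)"
    by (rule sum.image_gen[OF fD])
  also have "\<dots> = (\<Sum>p\<in>Qpairs E. 2 * (\<Prod>e\<in>p. ?w e))"
    unfolding Q[symmetric]
  proof (rule sum.cong[OF refl])
    fix p assume "p \<in> Qpairs E"
    then obtain e f where ef: "(e,f) \<in> D" "p = {e,f}" using Q by auto
    then have efE: "e \<in> E" "f \<in> E" "e \<inter> f = {}" unfolding D_def by auto
    have enf: "e \<noteq> f" using efE ne by auto
    have fib: "{q\<in>D. (\<lambda>(e,f). {e,f}) q = p} = {(e,f),(f,e)}"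
      using ef efE unfolding D_def by (auto simp: doubleton_eq_iff)
    show "(\<Sum>q\<in>{q\<in>D. (\<lambda>(e,f). {e,f}) q = p}. (\<lambda>(e,f). ?w e * ?w f) q) = 2 * (\<Prod>e\<in>p. ?w e)"
      unfolding fib using enf ef(2) by simp
  qed
  finally show ?thesis by (simp add: sum_distrib_left[symmetric])
qed

theorem proposition8:
  fixes V :: "'a set" and E :: "'a set set"
  assumes "simple_graph V E"
  shows "(\<Sum>p\<in>Qpairs E. \<Prod>e\<in>p. real (\<Sum>x\<in>e. deg E x))
    = (1/2) * (\<Sum>st\<in>E. \<Sum>(s, t) \<in> {(s, t). st = {s, t} \<and> s \<noteq> t}.
         (1/2) * ((real (deg E s) + real (deg E t))
            * (real (card V) * mean_sq_deg V E - (real (xi E s) + real (xi E t))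
               - real (deg E s) * (real (deg E s) - 1) - real (deg E t) * (real (deg E t) - 1))))"
proof -
  let ?w = "\<lambda>f. real (\<Sum>x\<in>f. deg E x)"
  define F where "F = (\<lambda>s t. (real (deg E s) + real (deg E t))
            * (real (card V) * mean_sq_deg V E - (real (xi E s) + real (xi E t))
               - real (deg E s) * (real (deg E s) - 1) - real (deg E t) * (real (deg E t) - 1)))"
  have nS: "real (card V) * mean_sq_deg V E = (\<Sum>x\<in>V. real (deg E x) ^ 2)"
  proof (cases "card V = 0")
    case True
    have fV: "finite V" using assms by (simp add: simple_graph_def)
    then have "V = {}" using True by simp
    then show ?thesis by (simp add: mean_sq_deg_def)
  qed (simp add: mean_sq_deg_def)
  have Fsym: "F s t = F t s" for s t unfolding F_def by (simp add: algebra_simps)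
  show ?thesis
    unfolding lhs_eq[OF assms]
  proof (rule arg_cong[where f="\<lambda>x. (1/2) * x"], rule sum.cong[OF refl])
    fix e assume e: "e \<in> E"
    then obtain a b where ab: "a \<noteq> b" "e = {a,b}" using sg_edge[OF assms] by blast
    have S: "{(s, t). e = {s, t} \<and> s \<noteq> t} = {(a,b),(b,a)}"
      using ab by (auto simp: doubleton_eq_iff)
    have "(\<Sum>(s, t) \<in> {(s, t). e = {s, t} \<and> s \<noteq> t}. (1/2) * F s t) = F a b"
      unfolding S using ab Fsym[of a b] by simp
    also have "F a b = (\<Sum>f\<in>{f\<in>E. e \<inter> f = {}}. ?w e * ?w f)"
      unfolding F_def nS sum_distrib_left[symmetric] ab(2)
      using disj_sum[OF assms e[unfolded ab(2)] ab(1)] ab(1) by simp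
    finally show "(\<Sum>f\<in>{f\<in>E. e \<inter> f = {}}. ?w e * ?w f) =
      (\<Sum>(s, t) \<in> {(s, t). e = {s, t} \<and> s \<noteq> t}. (1/2) * ((real (deg E s) + real (deg E t))
            * (real (card V) * mean_sq_deg V E - (real (xi E s) + real (xi E t))
               - real (deg E s) * (real (deg E s) - 1) - real (deg E t) * (real (deg E t) - 1))))"
      unfolding F_def by simp
  qed
qed

end
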